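(* For the binary tree-shifts $X_{10}=(B,D)$ and $X_{12}=(B,F)$, the limit $h_{PS}$ exists and $$h_{PS}(X_{10})=h_{PS}(X_{12})=\frac12\sum_{n=2}^\infty\frac{\log n}{2^n}.$$
   Context: Binary tree-shifts: $k=2$, directions $a_1,a_2$, alphabet $\{0,1\}$; $(P,Q)$ is the set of trees $t:\{a_1,a_2\}^*\to\{0,1\}$ with $P_{t_x,t_{xa_1}}=1$, $Q_{t_x,t_{xa_2}}=1$ for all nodes $x$. Matrices: $B=\begin{pmatrix}1&0\\0&1\end{pmatrix}$, $D=\begin{pmatrix}1&1\\1&0\end{pmatrix}$, $F=\begin{pmatrix}0&1\\1&1\end{pmatrix}$. $p(n)$ is the number of allowed blocks of length $n$ (labellings $t|_{\Delta_n}$, $\Delta_n$ the words of length $\le n$), and $h_{PS}=\lim_{n\to\infty}\frac{\log p(n)}{1+2+\cdots+2^n}$. *)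

theory Defs
  imports Complex_Main
begin

text \<open>Directions of the binary tree; nodes are finite words over them.
  The child of node x in direction d is x @ [d].\<close>
datatype dir = a1 | a2

text \<open>2x2 0-1 matrices indexed by the alphabet {0,1}.\<close>
type_synonym mat01 = "nat \<Rightarrow> nat \<Rightarrow> nat"

definition matB :: mat01 where
  "matB i j = (if i \<in> {0,1} \<and> j \<in> {0,1} \<and> i = j then 1 else 0)"

definition matD :: mat01 where
  "matD i j = (if i \<in> {0,1} \<and> j \<in> {0,1} \<and> \<not> (i = 1 \<and> j = 1) then 1 else 0)"

definition matF :: mat01 where
  "matF i j = (if i \<in> {0,1} \<and> j \<in> {0,1} \<and> \<not> (i = 0 \<and> j = 0) then 1 else 0)"

definition tree_shift :: "mat01 \<Rightarrow> mat01 \<Rightarrow> (dir list \<Rightarrow> nat) set" where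
  "tree_shift P Q = {t. (\<forall>x. t x \<in> {0,1}) \<and>
      (\<forall>x. P (t x) (t (x @ [a1])) = 1 \<and> Q (t x) (t (x @ [a2])) = 1)}"

text \<open>Restriction of a labelling to Delta_n (words of length at most n);
  outside Delta_n the value is normalised to 0.\<close>
definition block :: "(dir list \<Rightarrow> nat) \<Rightarrow> nat \<Rightarrow> (dir list \<Rightarrow> nat)" where
  "block t n = (\<lambda>x. if length x \<le> n then t x else 0)"

definition num_blocks :: "(dir list \<Rightarrow> nat) set \<Rightarrow> nat \<Rightarrow> nat" where
  "num_blocks X n = card ((\<lambda>t. block t n) ` X)"

definition hPS_seq :: "(dir list \<Rightarrow> nat) set \<Rightarrow> nat \<Rightarrow> real" where
  "hPS_seq X n = ln (real (num_blocks X n)) / real (\<Sum>i\<le>n. (2::nat) ^ i)"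

end

theory Submission
  imports Defs "HOL-Real_Asymp.Real_Asymp"
begin

definition join :: "nat \<Rightarrow> (dir list \<Rightarrow> nat) \<Rightarrow> (dir list \<Rightarrow> nat) \<Rightarrow> dir list \<Rightarrow> nat" where
  "join c l r = (\<lambda>x. case x of [] \<Rightarrow> c | d#y \<Rightarrow> (case d of a1 \<Rightarrow> l y | a2 \<Rightarrow> r y))"

definition RR where "RR Q n c = (\<lambda>t. block t n) ` {t \<in> tree_shift matB Q. t [] = c}"
definition SS where "SS Q n c = (\<lambda>t. block t n) ` {t \<in> tree_shift matB Q. Q c (t []) = 1}"

lemma join_simps[simp]: "join c l r [] = c" "join c l r (a1#y) = l y" "join c l r (a2#y) = r y"
  by (auto simp: join_def)

lemma tsD: assumes "t \<in> tree_shift P Q" shows "t x \<in> {0,1}" "P (t x) (t (x@[a1])) = 1" "Q (t x) (t (x@[a2])) = 1"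
proof -
  have h: "(\<forall>x. t x \<in> {0,1}) \<and> (\<forall>x. P (t x) (t (x @ [a1])) = 1 \<and> Q (t x) (t (x @ [a2])) = 1)"
    using assms unfolding tree_shift_def mem_Collect_eq .
  show "t x \<in> {0,1}" using h by (rule conjE) (erule allE)
  show "P (t x) (t (x@[a1])) = 1" using h by (metis (no_types))
  show "Q (t x) (t (x@[a2])) = 1" using h by (metis (no_types))
qed

lemma tsI: "(\<And>x. t x \<in> {0,1}) \<Longrightarrow> (\<And>x. P (t x) (t (x@[a1])) = 1) \<Longrightarrow> (\<And>x. Q (t x) (t (x@[a2])) = 1) \<Longrightarrow> t \<in> tree_shift P Q"
  unfolding tree_shift_def mem_Collect_eq by blast

lemma matB_eq: "matB i j = 1 \<Longrightarrow> i = j"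
proof (rule ccontr)
  assume h: "matB i j = 1" "i \<noteq> j"
  then have "matB i j = 0" unfolding matB_def by simp
  with h(1) show False by simp
qed

lemma join_in:
  assumes "t1 \<in> tree_shift matB Q" "t2 \<in> tree_shift matB Q" "t1 [] = c" "Q c (t2 []) = 1" "c \<in> {0,1}"
  shows "join c t1 t2 \<in> tree_shift matB Q"
proof -
  have "matB (t1 []) (t1 [a1]) = 1" using tsD(2)[OF assms(1), of "[]"] by simp
  then have "t1 [] = t1 [a1]" by (rule matB_eq)
  then have t1a: "t1 [a1] = c" using assms(3) by simp
  show ?thesis
  proof (rule tsI)
    fix x
    show "join c t1 t2 x \<in> {0,1}"
    proof (cases x)
      case Nil then show ?thesis using assms(5) by simp
    next
      case (Cons d y) then show ?thesis using tsD(1)[OF assms(1), of y] tsD(1)[OF assms(2), of y] by (cases d) simp_all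
    qed
    show "matB (join c t1 t2 x) (join c t1 t2 (x @ [a1])) = 1"
    proof (cases x)
      case Nil then show ?thesis using assms(3,5) t1a by (simp add: matB_def)
    next
      case (Cons d y) then show ?thesis using tsD(2)[OF assms(1), of y] tsD(2)[OF assms(2), of y] by (cases d) simp_all
    qed
    show "Q (join c t1 t2 x) (join c t1 t2 (x @ [a2])) = 1"
    proof (cases x)
      case Nil then show ?thesis using assms(4) by simp
    next
      case (Cons d y) then show ?thesis using tsD(3)[OF assms(1), of y] tsD(3)[OF assms(2), of y] by (cases d) simp_all
    qed
  qed
qed

lemma sub_in: assumes "t \<in> tree_shift P Q" shows "(\<lambda>y. t (d#y)) \<in> tree_shift P Q"
proof (rule tsI)
  fix x
  show "t (d#x) \<in> {0,1}" by (rule tsD(1)[OF assms])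
  show "P (t (d#x)) (t (d#(x@[a1]))) = 1" using tsD(2)[OF assms, of "d#x"] by simp
  show "Q (t (d#x)) (t (d#(x@[a2]))) = 1" using tsD(3)[OF assms, of "d#x"] by simp
qed

lemma root_a1: "t \<in> tree_shift matB Q \<Longrightarrow> t [a1] = t []"
proof -
  assume "t \<in> tree_shift matB Q"
  then have "matB (t []) (t [a1]) = 1" using tsD(2)[of t matB Q "[]"] by simp
  then show ?thesis by (rule matB_eq[symmetric])
qed

lemma root01: "t \<in> tree_shift P Q \<Longrightarrow> t [] \<in> {0,1}"
  by (rule tsD(1))

lemma join_eta: "join (t []) (\<lambda>y. t (a1#y)) (\<lambda>y. t (a2#y)) = t"
proof
  fix x show "join (t []) (\<lambda>y. t (a1#y)) (\<lambda>y. t (a2#y)) x = t x"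
  proof (cases x)
    case (Cons d y) then show ?thesis by (cases d) simp_all
  qed simp
qed

lemma block_join: "block (join c l r) (Suc n) = join c (block l n) (block r n)"
proof
  fix x show "block (join c l r) (Suc n) x = join c (block l n) (block r n) x"
  proof (cases x)
    case (Cons d y) then show ?thesis by (cases d) (simp_all add: block_def)
  qed (simp add: block_def)
qed

lemma join_inj: "inj_on (\<lambda>(l,r). join c l r) A"
proof (rule inj_onI)
  fix p q assume h0: "p \<in> A" "q \<in> A" "(\<lambda>(l,r). join c l r) p = (\<lambda>(l,r). join c l r) q"
  obtain l r where p: "p = (l,r)" by (cases p)
  obtain l' r' where q: "q = (l',r')" by (cases q)
  have h: "join c l r = join c l' r'" using h0(3) p q by simp
  have "l = l'" proof fix y show "l y = l' y" using fun_cong[OF h, of "a1#y"] by simp qed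
  moreover have "r = r'" proof fix y show "r y = r' y" using fun_cong[OF h, of "a2#y"] by simp qed
  ultimately show "p = q" using p q by simp
qed

lemma RR_Suc:
  assumes "c \<in> {0,1}"
  shows "RR Q (Suc n) c = (\<lambda>(l,r). join c l r) ` (RR Q n c \<times> SS Q n c)"
proof
  show "RR Q (Suc n) c \<subseteq> (\<lambda>(l,r). join c l r) ` (RR Q n c \<times> SS Q n c)"
  proof
    fix u assume "u \<in> RR Q (Suc n) c"
    then obtain t where t: "t \<in> tree_shift matB Q" "t [] = c" "u = block t (Suc n)"
      unfolding RR_def by blast
    have u: "u = join c (block (\<lambda>y. t (a1#y)) n) (block (\<lambda>y. t (a2#y)) n)"
      using t(2,3) block_join[of c "\<lambda>y. t (a1#y)" "\<lambda>y. t (a2#y)" n] join_eta[of t] by simp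
    have "(\<lambda>y. t (a1#y)) \<in> {t \<in> tree_shift matB Q. t [] = c}"
      using sub_in[OF t(1), of a1] root_a1[OF t(1)] t(2) by simp
    then have m1: "block (\<lambda>y. t (a1#y)) n \<in> RR Q n c"
      unfolding RR_def by (rule imageI)
    have "Q (t []) (t ([] @ [a2])) = 1" using tsD(3)[OF t(1)] .
    then have "(\<lambda>y. t (a2#y)) \<in> {t \<in> tree_shift matB Q. Q c (t []) = 1}"
      using sub_in[OF t(1), of a2] t(2) by simp
    then have m2: "block (\<lambda>y. t (a2#y)) n \<in> SS Q n c"
      unfolding SS_def by (rule imageI)
    have "(block (\<lambda>y. t (a1#y)) n, block (\<lambda>y. t (a2#y)) n) \<in> RR Q n c \<times> SS Q n c"
      using m1 m2 by (rule SigmaI)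
    then show "u \<in> (\<lambda>(l,r). join c l r) ` (RR Q n c \<times> SS Q n c)"
      unfolding u by (rule rev_image_eqI) simp
  qed
next
  show "(\<lambda>(l,r). join c l r) ` (RR Q n c \<times> SS Q n c) \<subseteq> RR Q (Suc n) c"
  proof
    fix u assume "u \<in> (\<lambda>(l,r). join c l r) ` (RR Q n c \<times> SS Q n c)"
    then obtain p where p: "p \<in> RR Q n c \<times> SS Q n c" "u = (\<lambda>(l,r). join c l r) p" by (rule imageE)
    obtain l r where pl: "p = (l,r)" by (cases p)
    have lr: "l \<in> RR Q n c" "r \<in> SS Q n c" "u = join c l r" using p unfolding pl by simp_all
    obtain t1 where t1: "t1 \<in> tree_shift matB Q" "t1 [] = c" "l = block t1 n"
      using lr(1) unfolding RR_def by blast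
    obtain t2 where t2: "t2 \<in> tree_shift matB Q" "Q c (t2 []) = 1" "r = block t2 n"
      using lr(2) unfolding SS_def by blast
    have "join c t1 t2 \<in> {t \<in> tree_shift matB Q. t [] = c}"
      using join_in[OF t1(1) t2(1) t1(2) t2(2) assms] by simp
    then have "block (join c t1 t2) (Suc n) \<in> RR Q (Suc n) c" unfolding RR_def by (rule imageI)
    then show "u \<in> RR Q (Suc n) c" using lr(3) t1(3) t2(3) block_join[of c t1 t2 n] by simp
  qed
qed

lemma card_RR_Suc: "c \<in> {0,1} \<Longrightarrow> card (RR Q (Suc n) c) = card (RR Q n c) * card (SS Q n c)"
  by (simp add: RR_Suc card_image[OF join_inj] card_cartesian_product)

lemma X_split: "tree_shift matB Q = {t \<in> tree_shift matB Q. t [] = 0} \<union> {t \<in> tree_shift matB Q. t [] = 1}"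
  using root01[of _ matB Q] by blast

lemma RR_Un: "(\<lambda>t. block t n) ` tree_shift matB Q = RR Q n 0 \<union> RR Q n 1"
  unfolding RR_def by (subst X_split) (rule image_Un)

lemma SS_sub: "SS Q n c \<subseteq> RR Q n 0 \<union> RR Q n 1"
  unfolding SS_def RR_Un[symmetric] by blast

lemma RR_0_sub: "RR Q 0 c \<subseteq> {\<lambda>x. if x = [] then c else 0}"
  unfolding RR_def block_def by auto

lemma finite_RR: "finite (RR Q n c)"
proof (induction n arbitrary: c)
  case 0 show ?case using finite_subset[OF RR_0_sub] by simp
next
  case (Suc n)
  show ?case
  proof (cases "c \<in> {0,1}")
    case True
    have "finite (SS Q n c)" using finite_subset[OF SS_sub] Suc by blast
    then show ?thesis using RR_Suc[OF True] Suc by simp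
  next
    case False
    then have "RR Q (Suc n) c = {}" unfolding RR_def by (auto dest: root01)
    then show ?thesis by simp
  qed
qed

lemma RR_disj: "RR Q n 0 \<inter> RR Q n 1 = {}"
  unfolding RR_def block_def by (auto dest!: fun_cong[where x="[]"])

lemma num_blocks_RR: "num_blocks (tree_shift matB Q) n = card (RR Q n 0) + card (RR Q n 1)"
proof -
  have "(\<lambda>t. block t n) ` tree_shift matB Q = RR Q n 0 \<union> RR Q n 1"
    by (rule RR_Un)
  then show ?thesis unfolding num_blocks_def
    by (metis card_Un_disjoint finite_RR RR_disj)
qed

lemma card_RR_0:
  assumes "c \<in> {0,1}" "e \<in> {0,1}" "\<And>v. v \<in> {0,1} \<Longrightarrow> Q v e = 1"
  shows "card (RR Q 0 c) = 1"
proof -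
  define t where "t = (\<lambda>x::dir list. if set x \<subseteq> {a1} then c else e)"
  have "t \<in> tree_shift matB Q"
  proof (rule tsI)
    fix x
    show "t x \<in> {0,1}" using assms unfolding t_def by simp
    have tx: "t x \<in> {0,1}" using assms unfolding t_def by simp
    show "matB (t x) (t (x @ [a1])) = 1"
      using tx unfolding matB_def by (simp add: t_def)
    show "Q (t x) (t (x @ [a2])) = 1"
      using tx assms(3) by (simp add: t_def)
  qed
  moreover have "t [] = c" by (simp add: t_def)
  ultimately have "RR Q 0 c \<noteq> {}" unfolding RR_def by auto
  with RR_0_sub[of Q c] have "RR Q 0 c = {\<lambda>x. if x = [] then c else 0}" by blast
  then show ?thesis by simp
qed

lemma split_root: "{t \<in> tree_shift matB Q. R (t [])} =
   {t \<in> tree_shift matB Q. t [] = 0 \<and> R 0} \<union> {t \<in> tree_shift matB Q. t [] = 1 \<and> R 1}"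
proof (rule set_eqI)
  fix t
  show "t \<in> {t \<in> tree_shift matB Q. R (t [])} \<longleftrightarrow>
      t \<in> {t \<in> tree_shift matB Q. t [] = 0 \<and> R 0} \<union> {t \<in> tree_shift matB Q. t [] = 1 \<and> R 1}"
  proof (cases "t \<in> tree_shift matB Q")
    case True
    then have "t [] = 0 \<or> t [] = 1" using root01 by blast
    then show ?thesis
    proof
      assume h: "t [] = 0" show ?thesis using True h by simp
    next
      assume h: "t [] = 1" show ?thesis using True h by simp
    qed
  next
    case False then show ?thesis by simp
  qed
qed

lemma SS_eq: "SS Q n c = (if Q c 0 = 1 then RR Q n 0 else {}) \<union> (if Q c 1 = 1 then RR Q n 1 else {})"
  unfolding SS_def RR_def
  apply (subst split_root)
  apply (simp only: image_Un)
  apply (cases "Q c 0 = 1"; cases "Q c 1 = 1"; simp)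
  done

lemma SS_D0: "SS matD n 0 = RR matD n 0 \<union> RR matD n 1"
  by (simp add: SS_eq matD_def)
lemma SS_D1: "SS matD n 1 = RR matD n 0"
  by (simp add: SS_eq matD_def)
lemma SS_F1: "SS matF n 1 = RR matF n 0 \<union> RR matF n 1"
  by (simp add: SS_eq matF_def)
lemma SS_F0: "SS matF n 0 = RR matF n 1"
  by (simp add: SS_eq matF_def)


definition cc :: "nat \<Rightarrow> real" where "cc k = ln (real k + 2) - ln (real k + 1)"

lemma sum_pow2: "real (\<Sum>i\<le>n. (2::nat) ^ i) = 2 ^ (n+1) - 1"
  by (induction n) simp_all

lemma ln_bound: "ln (real k + 2) / 2 ^ k \<le> 2 * (3/4) ^ k"
proof -
  have "ln (real k + 2) \<le> real k + 1" using ln_le_minus_one[of "real k + 2"] by simp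
  also have "\<dots> \<le> 2 * (1 + real k * (1/2))" by simp
  also have "\<dots> \<le> 2 * (1 + 1/2) ^ k" using Bernoulli_inequality[of "1/2::real" k] by simp
  finally have "ln (real k + 2) \<le> 2 * (3/2) ^ k" by simp
  then have "ln (real k + 2) / 2 ^ k \<le> 2 * (3/2) ^ k / 2 ^ k" by (simp add: divide_right_mono)
  also have "\<dots> = 2 * (3/4) ^ k"
  proof -
    have "(3/4::real)^k * 2^k = (3/2)^k" by (simp add: power_mult_distrib[symmetric])
    then have "(3/2::real)^k = (3/4)^k * 2^k" by simp
    then show ?thesis by simp
  qed
  finally show ?thesis .
qed

lemma summable_u: "summable (\<lambda>k. ln (real k + 2) / 2 ^ k)"
proof (rule summable_comparison_test)
  show "\<exists>N. \<forall>n\<ge>N. norm (ln (real n + 2) / 2 ^ n) \<le> 2 * (3/4) ^ n"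
    using ln_bound by (intro exI[of _ 0]) simp
  show "summable (\<lambda>n. 2 * (3/4::real) ^ n)" by (intro summable_mult summable_geometric) simp
qed

lemma sums_cc: "(\<lambda>k. cc k / 2 ^ k) sums (2 * (\<Sum>n. ln (real (n + 2)) / 2 ^ (n + 2)))"
proof -
  define u where "u k = ln (real k + 2) / 2 ^ k" for k
  define v where "v k = ln (real k + 1) / 2 ^ k" for k :: nat
  have su: "summable u" using summable_u unfolding u_def .
  have vS: "v (Suc k) = u k / 2" for k unfolding u_def v_def by (simp add: add.commute)
  have sv1: "summable (\<lambda>k. v (Suc k))" unfolding vS using su by (rule summable_divide)
  have sv: "summable v" using sv1 summable_Suc_iff by blast
  have "suminf (\<lambda>k. v (Suc k)) = suminf v - v 0" using suminf_split_head[OF sv] .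
  then have ev: "suminf v = suminf u / 2" unfolding vS by (simp add: v_def suminf_divide[OF su])
  have "(\<lambda>k. u k - v k) sums (suminf u - suminf v)" by (intro sums_diff summable_sums su sv)
  moreover have "(\<lambda>k. u k - v k) = (\<lambda>k. cc k / 2 ^ k)"
    by (rule ext) (simp add: u_def v_def cc_def diff_divide_distrib)
  moreover have T4: "(\<Sum>n. ln (real (n + 2)) / 2 ^ (n + 2)) = suminf u / 4"
  proof -
    have "(\<lambda>n. ln (real (n + 2)) / 2 ^ (n + 2)) = (\<lambda>n. u n / 4)"
      by (rule ext) (simp add: u_def add.commute)
    then show ?thesis using suminf_divide[OF su, of 4] by simp
  qed
  ultimately have "(\<lambda>k. cc k / 2 ^ k) sums (suminf u - suminf v)" by simp
  moreover have "suminf u - suminf v = 2 * (\<Sum>n. ln (real (n + 2)) / 2 ^ (n + 2))"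
    unfolding T4 ev by simp
  ultimately show ?thesis by simp
qed

lemma seq_lim:
  fixes A B :: "nat \<Rightarrow> nat"
  assumes A0: "A 0 = 1" and B0: "B 0 = 1"
    and AS: "\<And>n. A (Suc n) = A n * (A n + B n)" and BS: "\<And>n. B (Suc n) = B n * A n"
  shows "(\<lambda>n. ln (real (A n + B n)) / real (\<Sum>i\<le>n. (2::nat) ^ i)) \<longlonglongrightarrow>
           (1/2) * (\<Sum>n. ln (real (n + 2)) / 2 ^ (n + 2))"
proof -
  define T where "T = (\<Sum>n. ln (real (n + 2)) / 2 ^ (n + 2))"
  have AB: "(n+1) * B n = A n \<and> A n \<ge> 1" for n
  proof (induction n)
    case 0 then show ?case using A0 B0 by simp
  next
    case (Suc n)
    then have "(Suc n + 1) * B (Suc n) = A (Suc n)" unfolding AS BS by (simp add: algebra_simps)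
    moreover have "A (Suc n) \<ge> 1" using Suc unfolding AS by simp
    ultimately show ?case by simp
  qed
  define G where "G n = ln (real (A n))" for n
  have Apos: "real (A n) > 0" for n using AB[of n] by simp
  have pA: "real (A n + B n) = real (A n) * ((real n + 2) / (real n + 1))" for n
  proof -
    have "real (n+1) * real (B n) = real (A n)" using AB[of n] by (metis of_nat_mult)
    then have "real (B n) = real (A n) / (real n + 1)" by (simp add: field_simps)
    then show ?thesis by (simp add: field_simps)
  qed
  have lnp: "ln (real (A n + B n)) = G n + cc n" for n
    unfolding pA G_def cc_def using Apos[of n] by (simp add: ln_mult ln_div)
  have GS: "G (Suc n) = 2 * G n + cc n" for n
  proof -
    have "G (Suc n) = ln (real (A n) * real (A n + B n))" unfolding G_def AS by simp
    also have "\<dots> = G n + ln (real (A n + B n))" using Apos[of n] AB[of n]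
      by (subst ln_mult) (simp_all add: G_def)
    finally show ?thesis using lnp by simp
  qed
  have Gsum: "G n / 2 ^ n = (1/2) * (\<Sum>k<n. cc k / 2 ^ k)" for n
  proof (induction n)
    case 0 then show ?case by (simp add: G_def A0)
  next
    case (Suc n)
    have "G (Suc n) / 2 ^ Suc n = G n / 2 ^ n + (1/2) * (cc n / 2 ^ n)"
      unfolding GS by (simp add: field_simps)
    then show ?case using Suc by (simp add: algebra_simps)
  qed
  have l1: "(\<lambda>n. G n / 2 ^ n) \<longlonglongrightarrow> T"
  proof -
    have "(\<lambda>n. \<Sum>k<n. cc k / 2 ^ k) \<longlonglongrightarrow> 2 * T" using sums_cc unfolding T_def sums_def .
    then have "(\<lambda>n. (1/2) * (\<Sum>k<n. cc k / 2 ^ k)) \<longlonglongrightarrow> (1/2) * (2 * T)" by (intro tendsto_mult tendsto_const)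
    then show ?thesis unfolding Gsum by simp
  qed
  have l2: "(\<lambda>n::nat. 2 ^ n / (2 ^ (n+1) - 1 :: real)) \<longlonglongrightarrow> 1/2" by real_asymp
  have l3: "(\<lambda>n::nat. cc n / (2 ^ (n+1) - 1 :: real)) \<longlonglongrightarrow> 0" unfolding cc_def by real_asymp
  have "(\<lambda>n. (G n / 2 ^ n) * (2 ^ n / (2 ^ (n+1) - 1)) + cc n / (2 ^ (n+1) - 1)) \<longlonglongrightarrow> T * (1/2) + 0"
    by (intro tendsto_add tendsto_mult l1 l2 l3)
  moreover have "(\<lambda>n. (G n / 2 ^ n) * (2 ^ n / (2 ^ (n+1) - 1)) + cc n / (2 ^ (n+1) - 1)) =
      (\<lambda>n. ln (real (A n + B n)) / real (\<Sum>i\<le>n. (2::nat) ^ i))"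
  proof (rule ext)
    fix n :: nat
    have gen: "G n / 2 ^ n * (2 ^ n / X) + cc n / X = (G n + cc n) / X" for X :: real
      by (simp add: add_divide_distrib)
    show "(G n / 2 ^ n) * (2 ^ n / (2 ^ (n+1) - 1)) + cc n / (2 ^ (n+1) - 1) =
      ln (real (A n + B n)) / real (\<Sum>i\<le>n. (2::nat) ^ i)"
      unfolding sum_pow2 lnp by (rule gen)
  qed
  ultimately show ?thesis unfolding T_def by (simp add: mult.commute)
qed

lemma card_U: "card (RR Q n 0 \<union> RR Q n 1) = card (RR Q n 0) + card (RR Q n 1)"
  by (metis card_Un_disjoint finite_RR RR_disj)

theorem mainTheorem16:
  shows "hPS_seq (tree_shift matB matD) \<longlonglongrightarrow>
           (1/2) * (\<Sum>n. ln (real (n + 2)) / 2 ^ (n + 2))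
       \<and> hPS_seq (tree_shift matB matF) \<longlonglongrightarrow>
           (1/2) * (\<Sum>n. ln (real (n + 2)) / 2 ^ (n + 2))"
proof
  have "(\<lambda>n. ln (real (card (RR matD n 0) + card (RR matD n 1))) / real (\<Sum>i\<le>n. (2::nat) ^ i)) \<longlonglongrightarrow>
           (1/2) * (\<Sum>n. ln (real (n + 2)) / 2 ^ (n + 2))"
  proof (rule seq_lim)
    show "card (RR matD 0 0) = 1" by (rule card_RR_0[where e=0]) (auto simp: matD_def)
    show "card (RR matD 0 1) = 1" by (rule card_RR_0[where e=0]) (auto simp: matD_def)
    fix n
    show "card (RR matD (Suc n) 0) = card (RR matD n 0) * (card (RR matD n 0) + card (RR matD n 1))"
      using card_RR_Suc[of 0 matD n, unfolded SS_D0 card_U] by simp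
    show "card (RR matD (Suc n) 1) = card (RR matD n 1) * card (RR matD n 0)"
      using card_RR_Suc[of 1 matD n, unfolded SS_D1] by simp
  qed
  then show "hPS_seq (tree_shift matB matD) \<longlonglongrightarrow> (1/2) * (\<Sum>n. ln (real (n + 2)) / 2 ^ (n + 2))"
    unfolding hPS_seq_def num_blocks_RR .
next
  have "(\<lambda>n. ln (real (card (RR matF n 1) + card (RR matF n 0))) / real (\<Sum>i\<le>n. (2::nat) ^ i)) \<longlonglongrightarrow>
           (1/2) * (\<Sum>n. ln (real (n + 2)) / 2 ^ (n + 2))"
  proof (rule seq_lim)
    show "card (RR matF 0 1) = 1" by (rule card_RR_0[where e=1]) (auto simp: matF_def)
    show "card (RR matF 0 0) = 1" by (rule card_RR_0[where e=1]) (auto simp: matF_def)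
    fix n
    show "card (RR matF (Suc n) 1) = card (RR matF n 1) * (card (RR matF n 1) + card (RR matF n 0))"
      using card_RR_Suc[of 1 matF n, unfolded SS_F1 card_U] by simp
    show "card (RR matF (Suc n) 0) = card (RR matF n 0) * card (RR matF n 1)"
      using card_RR_Suc[of 0 matF n, unfolded SS_F0] by simp
  qed
  then show "hPS_seq (tree_shift matB matF) \<longlonglongrightarrow> (1/2) * (\<Sum>n. ln (real (n + 2)) / 2 ^ (n + 2))"
    unfolding hPS_seq_def num_blocks_RR by (simp add: add.commute)
qed

end
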